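(* Let $h:\mathbb R^n\to\mathbb R$, $h(x):=\|g_r(x)\|-g_0(x)$. For every $\delta>0$ there exist $\epsilon>0$ and a neighborhood $U$ of $\bar x$ such that for every $x_0\in U$ with $g_r(x_0)\neq0$, $|h(x_0)|<\epsilon\|g_r(x_0)\|$ and $\|\nabla h(x_0)\|\ge\delta$, there exists $\tilde x\in\mathbb R^n$ with $h(\tilde x)=0$ and $\|\tilde x-x_0\|\le 2|h(x_0)|/\delta$.
   Context: Let $n,m\ge1$ and let $g=(g_0,g_r):\mathbb R^n\to\mathbb R\times\mathbb R^m$ be $C^2$-smooth around a point $\bar x\in\mathbb R^n$ with $g(\bar x)=0$. (Note $h$ is $C^2$ near every point $x$ with $g_r(x)\ne0$ close to $\bar x$.) *)

theory Defs
  imports "HOL-Analysis.Analysis"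
begin

definition C2_on :: "'a::real_normed_vector set \<Rightarrow> ('a \<Rightarrow> 'b::real_normed_vector) \<Rightarrow> bool" where
  "C2_on V f \<longleftrightarrow> (\<exists>f' :: 'a \<Rightarrow> ('a \<Rightarrow>\<^sub>L 'b). \<exists>f'' :: 'a \<Rightarrow> ('a \<Rightarrow>\<^sub>L ('a \<Rightarrow>\<^sub>L 'b)).
      (\<forall>x\<in>V. (f has_derivative blinfun_apply (f' x)) (at x)) \<and>
      (\<forall>x\<in>V. (f' has_derivative blinfun_apply (f'' x)) (at x)) \<and>
      continuous_on V f'')"

definition C2_near :: "('a::real_normed_vector \<Rightarrow> 'b::real_normed_vector) \<Rightarrow> 'a \<Rightarrow> bool" where
  "C2_near f a \<longleftrightarrow> (\<exists>V. open V \<and> a \<in> V \<and> C2_on V f)"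

end

theory Submission imports Defs begin

lemma norm_lin_err:
  fixes a b :: "'a::real_inner"
  assumes "a \<noteq> 0"
  shows "\<bar>norm b - norm a - inner (sgn a) (b - a)\<bar> \<le> (norm (b - a))\<^sup>2 / norm a"
proof -
  have na: "norm a > 0" using assms by simp
  have sa: "inner (sgn a) a = norm a"
    using na by (simp add: sgn_div_norm inner_commute power2_norm_eq_inner[symmetric] power2_eq_square)
  have sb: "inner (sgn a) b = inner a b / norm a"
    by (simp add: sgn_div_norm divide_inverse mult.commute)
  have cs: "inner a b \<le> norm a * norm b" by (rule norm_cauchy_schwarz)
  have e: "(norm (b - a))\<^sup>2 = (norm a)\<^sup>2 + (norm b)\<^sup>2 - 2 * inner a b"
    by (simp add: power2_norm_eq_inner inner_diff inner_commute)
  have "norm b - norm a - inner (sgn a) (b - a) = (norm a * norm b - inner a b) / norm a"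
    using na by (simp add: inner_diff_right sa sb field_simps)
  moreover have "0 \<le> norm a * norm b - inner a b" using cs by simp
  moreover have "norm a * norm b - inner a b \<le> (norm (b - a))\<^sup>2"
  proof -
    have "0 \<le> (norm a - norm b)\<^sup>2" by simp
    then show ?thesis unfolding e using cs by (simp add: power2_eq_square algebra_simps)
  qed
  ultimately show ?thesis using na by (simp add: divide_right_mono)
qed

theorem lemma5p3:
  fixes g :: "real^'n \<Rightarrow> real \<times> (real^'m)"
    and xbar :: "real^'n"
    and h :: "real^'n \<Rightarrow> real"
  assumes C2: "C2_near g xbar"
    and g0: "g xbar = 0"
    and h_def: "\<And>x. h x = norm (snd (g x)) - fst (g x)"
  shows "\<forall>\<delta>>0. \<exists>\<epsilon>>0. \<exists>U. open U \<and> xbar \<in> U \<and>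
           (\<forall>x0\<in>U. \<forall>G :: real^'n.
              snd (g x0) \<noteq> 0 \<and> \<bar>h x0\<bar> < \<epsilon> * norm (snd (g x0)) \<and>
              (h has_derivative (\<lambda>v. G \<bullet> v)) (at x0) \<and> norm G \<ge> \<delta>
              \<longrightarrow> (\<exists>xt. h xt = 0 \<and> norm (xt - x0) \<le> 2 * \<bar>h x0\<bar> / \<delta>))"
proof (intro allI impI)
  fix \<delta> :: real assume dpos: "\<delta> > 0"
  obtain V D D2 where V: "open V" "xbar \<in> V"
    and gD: "\<And>x. x \<in> V \<Longrightarrow> (g has_derivative blinfun_apply (D x)) (at x)"
    and DD: "\<And>x. x \<in> V \<Longrightarrow> (D has_derivative blinfun_apply (D2 x)) (at x)"
    using C2 unfolding C2_near_def C2_on_def by blast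
  have hh: "h = (\<lambda>x. norm (snd (g x)) - fst (g x))" using h_def by auto
  define \<eta> where "\<eta> = \<delta> / 16"
  have eta: "\<eta> > 0" using dpos by (simp add: \<eta>_def)
  have Dcont: "continuous (at xbar) D" using DD[OF V(2)] by (rule has_derivative_continuous)
  obtain r1 where r1: "r1 > 0" "\<And>x. dist x xbar < r1 \<Longrightarrow> dist (D x) (D xbar) < \<eta>"
    using Dcont eta unfolding continuous_at_eps_delta by blast
  obtain r2 where r2: "r2 > 0" "ball xbar r2 \<subseteq> V" using V openE by blast
  define r where "r = min r1 r2"
  have rpos: "r > 0" using r1 r2 by (simp add: r_def)
  define B where "B = ball xbar r"
  have BV: "B \<subseteq> V" using r2 by (auto simp: B_def r_def)
  have Dclose: "norm (D x - D xbar) < \<eta>" if "x \<in> B" for x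
    using r1(2)[of x] that by (auto simp: B_def r_def dist_norm norm_minus_commute)
  define L where "L = norm (D xbar) + \<eta>"
  have Lpos: "L > 0" using eta by (simp add: L_def add_nonneg_pos)
  have DL: "norm (D x) \<le> L" if "x \<in> B" for x
  proof -
    have "norm (D x) \<le> norm (D xbar) + norm (D x - D xbar)" by (metis norm_triangle_sub)
    then show ?thesis using Dclose[OF that] by (simp add: L_def)
  qed
  have gLip: "norm (g y - g x) \<le> L * norm (y - x)" if "x \<in> B" "y \<in> B" for x y
  proof (rule differentiable_bound[of B])
    show "convex B" by (simp add: B_def)
    show "(g has_derivative blinfun_apply (D z)) (at z within B)" if "z \<in> B" for z
      using gD[of z] BV that has_derivative_at_withinI by blast
    show "onorm (blinfun_apply (D z)) \<le> L" if "z \<in> B" for z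
      using DL[OF that] by (simp add: norm_blinfun.rep_eq)
  qed (use that in auto)
  have glin: "norm (g y - g x - D x (y - x)) \<le> norm (y - x) * (2 * \<eta>)" if "x \<in> B" "y \<in> B" for x y
  proof (rule differentiable_bound_linearization[of x y B])
    show "x + t *\<^sub>R (y - x) \<in> B" if "t \<in> {0..1}" for t
      using convexD_alt[of B x y t] \<open>x \<in> B\<close> \<open>y \<in> B\<close> that
      by (simp add: B_def algebra_simps)
    show "(g has_derivative blinfun_apply (D z)) (at z within B)" if "z \<in> B" for z
      using gD[of z] BV that has_derivative_at_withinI by blast
    show "onorm (blinfun_apply (D z) - blinfun_apply (D x)) \<le> 2 * \<eta>" if "z \<in> B" for z
    proof -
      have "norm (D z - D x) \<le> norm (D z - D xbar) + norm (D x - D xbar)"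
        by (metis norm_diff_triangle_le norm_minus_commute order_refl)
      then have "norm (D z - D x) \<le> 2 * \<eta>" using Dclose[OF that] Dclose[OF \<open>x \<in> B\<close>] by simp
      moreover have "blinfun_apply (D z - D x) = (\<lambda>v. D z v - D x v)"
        by (rule ext) (simp add: blinfun.diff_left)
      ultimately show ?thesis by (simp add: norm_blinfun.rep_eq fun_diff_def)
    qed
  qed (use that in auto)
  have gcont: "continuous_on V g"
    using gD by (meson has_derivative_continuous continuous_at_imp_continuous_on)
  have hcont: "continuous_on B h"
    unfolding hh using continuous_on_subset[OF gcont BV] by (intro continuous_intros)
  define \<epsilon> where "\<epsilon> = \<delta>\<^sup>2 / (8 * L\<^sup>2)"
  have epos: "\<epsilon> > 0" using dpos Lpos by (simp add: \<epsilon>_def)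
  define \<rho> where "\<rho> = r * \<delta> / (4 * \<epsilon>)"
  have rhopos: "\<rho> > 0" using rpos dpos epos by (simp add: \<rho>_def)
  obtain r3 where r3: "r3 > 0" "\<And>x. dist x xbar < r3 \<Longrightarrow> dist (g x) (g xbar) < \<rho>"
    using has_derivative_continuous[OF gD[OF V(2)]] rhopos unfolding continuous_at_eps_delta by blast
  define U where "U = ball xbar (min r3 (r/2))"
  show "\<exists>\<epsilon>>0. \<exists>U. open U \<and> xbar \<in> U \<and>
           (\<forall>x0\<in>U. \<forall>G :: real^'n.
              snd (g x0) \<noteq> 0 \<and> \<bar>h x0\<bar> < \<epsilon> * norm (snd (g x0)) \<and>
              (h has_derivative (\<lambda>v. G \<bullet> v)) (at x0) \<and> norm G \<ge> \<delta>
              \<longrightarrow> (\<exists>xt. h xt = 0 \<and> norm (xt - x0) \<le> 2 * \<bar>h x0\<bar> / \<delta>))"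
  proof (intro exI[of _ \<epsilon>] exI[of _ U] conjI epos ballI allI impI)
    show "open U" by (simp add: U_def)
    show "xbar \<in> U" using r3 rpos by (simp add: U_def)
    fix x0 G assume x0U: "x0 \<in> U"
      and H: "snd (g x0) \<noteq> 0 \<and> \<bar>h x0\<bar> < \<epsilon> * norm (snd (g x0)) \<and>
              (h has_derivative (\<lambda>v. G \<bullet> v)) (at x0) \<and> norm G \<ge> \<delta>"
    show "\<exists>xt. h xt = 0 \<and> norm (xt - x0) \<le> 2 * \<bar>h x0\<bar> / \<delta>"
    proof -
      from H have nz: "snd (g x0) \<noteq> 0" and hlt: "\<bar>h x0\<bar> < \<epsilon> * norm (snd (g x0))"
        and hG: "(h has_derivative (\<lambda>v. G \<bullet> v)) (at x0)" and Gd: "norm G \<ge> \<delta>" by auto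
      define a where "a = snd (g x0)"
      define h0 where "h0 = h x0"
      have anz: "a \<noteq> 0" using nz by (simp add: a_def)
      have napos: "norm a > 0" using anz by simp
      have x0B: "x0 \<in> B" using x0U rpos by (auto simp: U_def B_def)
      have dx0: "dist xbar x0 < r / 2" using x0U by (auto simp: U_def)
      have "dist (g x0) (g xbar) < \<rho>" using r3(2)[of x0] x0U by (auto simp: U_def dist_commute)
      then have ngx0: "norm (g x0) < \<rho>" by (simp add: g0 dist_norm)
      have "norm a \<le> norm (g x0)" unfolding a_def by (metis prod.collapse norm_snd_le)
      with ngx0 have narho: "norm a < \<rho>" by simp
      have V0: "x0 \<in> V" using x0B BV by auto
      have d2: "(h has_derivative (\<lambda>v. inner (snd (D x0 v)) (sgn a) - fst (D x0 v))) (at x0)"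
        unfolding hh a_def
        by (rule has_derivative_diff[OF has_derivative_compose[OF has_derivative_snd[OF gD[OF V0]]
              has_derivative_norm[OF nz]] has_derivative_fst[OF gD[OF V0]]])
      have Geq: "G \<bullet> v = inner (snd (D x0 v)) (sgn a) - fst (D x0 v)" for v
        using has_derivative_unique[OF hG d2] by metis
      show ?thesis
      proof (cases "h0 = 0")
        case True
        then show ?thesis by (intro exI[of _ x0]) (simp add: h0_def)
      next
        case False
        define s where "s = sgn h0"
        have sh0: "s * h0 = \<bar>h0\<bar>" by (simp add: s_def sgn_mult_abs abs_sgn mult.commute)
        have s2: "s * s = 1" using False by (simp add: s_def sgn_if)
        have snz: "s \<noteq> 0" using s2 by auto
        have Gpos: "norm G > 0" using Gd dpos by linarith
        define d where "d = - (s / norm G) *\<^sub>R G"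
        have nd: "norm d = 1" using Gpos s2 False by (simp add: d_def s_def abs_sgn_eq)
        have Gdd: "s * (G \<bullet> d) = - norm G"
        proof -
          have "G \<bullet> d = - (s / norm G) * (norm G)\<^sup>2"
            by (simp add: d_def power2_norm_eq_inner)
          then show ?thesis using Gpos s2 by (simp add: power2_eq_square field_simps)
        qed
        define t where "t = 2 * \<bar>h0\<bar> / \<delta>"
        have tpos: "t > 0" using False dpos by (simp add: t_def)
        have tdel: "t * \<delta> = 2 * \<bar>h0\<bar>" using dpos by (simp add: t_def)
        have tlt: "t < 2 * \<epsilon> * norm a / \<delta>"
          using hlt dpos unfolding t_def h0_def a_def by (simp add: divide_strict_right_mono)
        have "2 * \<epsilon> * norm a / \<delta> \<le> 2 * \<epsilon> * \<rho> / \<delta>"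
          using narho epos dpos by (simp add: divide_right_mono)
        moreover have "2 * \<epsilon> * \<rho> / \<delta> = r / 2" using epos dpos by (simp add: \<rho>_def)
        ultimately have tr: "t < r / 2" using tlt by linarith
        define p where "p \<tau> = x0 + \<tau> *\<^sub>R d" for \<tau>
        have pB: "p \<tau> \<in> B" if "\<tau> \<in> {0..t}" for \<tau>
        proof -
          have "dist xbar (p \<tau>) \<le> dist xbar x0 + dist x0 (p \<tau>)" by (rule dist_triangle)
          also have "dist x0 (p \<tau>) = \<tau>" using that nd by (simp add: p_def dist_norm)
          finally show ?thesis using dx0 tr that by (simp add: B_def)
        qed
        define x1 where "x1 = p t"
        define v where "v = t *\<^sub>R d"
        have x1B: "x1 \<in> B" using pB tpos by (simp add: x1_def)
        have x1v: "x1 - x0 = v" by (simp add: x1_def p_def v_def)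
        have nv: "norm v = t" using nd tpos by (simp add: v_def)
        define w where "w = g x1 - g x0 - D x0 v"
        have nw: "norm w \<le> t * (2 * \<eta>)" using glin[OF x0B x1B] by (simp add: w_def x1v nv)
        define b where "b = snd (g x1)"
        have Eeq: "h x1 - h0 - G \<bullet> v = (norm b - norm a - inner (sgn a) (b - a)) + inner (sgn a) (snd w) - fst w"
          by (simp add: h_def h0_def a_def b_def w_def Geq inner_diff_right inner_commute algebra_simps)
        have nba: "norm (b - a) \<le> L * t"
        proof -
          have "norm (b - a) \<le> norm (g x1 - g x0)" unfolding a_def b_def
            by (metis norm_snd_le prod.collapse snd_diff)
          also have "\<dots> \<le> L * t" using gLip[OF x0B x1B] by (simp add: x1v nv)
          finally show ?thesis .
        qed
        have E1: "\<bar>norm b - norm a - inner (sgn a) (b - a)\<bar> \<le> t * \<delta> / 4"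
        proof -
          have "\<bar>norm b - norm a - inner (sgn a) (b - a)\<bar> \<le> (norm (b - a))\<^sup>2 / norm a"
            by (rule norm_lin_err[OF anz])
          also have "\<dots> \<le> (L * t)\<^sup>2 / norm a"
            using nba napos by (intro divide_right_mono power_mono) auto
          also have "\<dots> = L\<^sup>2 * t * (t / norm a)" by (simp add: power2_eq_square)
          also have "\<dots> \<le> L\<^sup>2 * t * (2 * \<epsilon> / \<delta>)"
          proof (intro mult_left_mono)
            show "t / norm a \<le> 2 * \<epsilon> / \<delta>" using tlt napos dpos by (simp add: field_simps)
          qed (use tpos in auto)
          also have "\<dots> = t * \<delta> / 4" using Lpos dpos by (simp add: \<epsilon>_def field_simps power2_eq_square)
          finally show ?thesis .
        qed
        have E2: "\<bar>inner (sgn a) (snd w)\<bar> \<le> norm w"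
        proof -
          have "\<bar>inner (sgn a) (snd w)\<bar> \<le> norm (sgn a) * norm (snd w)" by (rule Cauchy_Schwarz_ineq2)
          also have "\<dots> \<le> norm w" using anz by (simp add: norm_sgn) (metis norm_snd_le prod.collapse)
          finally show ?thesis .
        qed
        have E3: "\<bar>fst w\<bar> \<le> norm w" by (metis norm_fst_le prod.collapse real_norm_def)
        have Ebd: "\<bar>h x1 - h0 - G \<bullet> v\<bar> \<le> \<bar>h0\<bar>"
        proof -
          have tri: "\<bar>X + Y - Z\<bar> \<le> \<bar>X\<bar> + \<bar>Y\<bar> + \<bar>Z\<bar>" for X Y Z :: real by arith
          show ?thesis
            using E1 E2 E3 nw tdel tri[of "norm b - norm a - inner (sgn a) (b - a)" "inner (sgn a) (snd w)" "fst w"]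
            unfolding Eeq by (simp add: \<eta>_def)
        qed
        have Gv: "s * (G \<bullet> v) = - t * norm G" using Gdd by (simp add: v_def) (metis mult.left_commute mult_minus_right)
        have "s * h x1 = s * h0 + s * (G \<bullet> v) + s * (h x1 - h0 - G \<bullet> v)" by (simp add: algebra_simps)
        also have "\<dots> \<le> \<bar>h0\<bar> - t * norm G + \<bar>h x1 - h0 - G \<bullet> v\<bar>"
        proof -
          have "s * (h x1 - h0 - G \<bullet> v) \<le> \<bar>s\<bar> * \<bar>h x1 - h0 - G \<bullet> v\<bar>"
            by (metis abs_ge_self abs_mult)
          moreover have "\<bar>s\<bar> = 1" using False by (simp add: s_def abs_sgn_eq)
          ultimately show ?thesis using sh0 Gv by simp
        qed
        also have "\<dots> \<le> 0" using Ebd Gd tpos tdel mult_left_mono[OF Gd, of t] by linarith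
        finally have sx1: "s * h (p t) \<le> 0" by (simp add: x1_def)
        have sx0: "0 \<le> s * h (p 0)" using sh0 by (simp add: p_def h0_def)
        have pc: "continuous_on {0..t} (\<lambda>\<tau>. s * h (p \<tau>))"
        proof -
          have "continuous_on {0..t} p" unfolding p_def by (intro continuous_intros)
          then have "continuous_on {0..t} (\<lambda>\<tau>. h (p \<tau>))"
            using continuous_on_compose2[OF hcont] pB by blast
          then show ?thesis by (intro continuous_intros)
        qed
        obtain \<tau> where \<tau>: "0 \<le> \<tau>" "\<tau> \<le> t" "s * h (p \<tau>) = 0"
          using IVT2'[of "\<lambda>\<tau>. s * h (p \<tau>)" t 0 0, OF sx1 sx0 _ pc] tpos by auto
        show ?thesis
        proof (intro exI[of _ "p \<tau>"] conjI)
          show "h (p \<tau>) = 0" using \<tau>(3) snz by simp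
          show "norm (p \<tau> - x0) \<le> 2 * \<bar>h x0\<bar> / \<delta>" using \<tau> nd by (simp add: p_def t_def h0_def)
        qed
      qed
    qed
  qed
qed

end
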